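(* There is an absolute constant $C$ such that for every $n\geq 1$, every $w\in\{0,1\}^n$ and every binary string $w'\neq w$ of any length $\geq 1$, there is a prenex first-order sentence over $\tau_{\mathsf{string}}$ with at most $\log_2(n)+C$ quantifiers, whose quantifier prefix strictly alternates and ends with $\forall$, that is true in $\mathbf{B}_w$ and false in $\mathbf{B}_{w'}$.
   Context: Vocabulary $\tau_{\mathsf{string}}=\langle <, S;\ \mathsf{min},\mathsf{max}\rangle$ with $<$ binary, $S$ unary, $\mathsf{min},\mathsf{max}$ constants. A string $w=w_1\cdots w_n\in\{0,1\}^n$ ($n\geq 1$) is encoded by the structure $\mathbf{B}_w$ with universe $\{1,\dots,n\}$, $<$ the usual order, $S=\{i: w_i=1\}$, $\mathsf{min}=1$, $\mathsf{max}=n$. The number of quantifiers is the number of quantifier occurrences. *)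

theory Defs
  imports Complex_Main
begin

text \<open>Binary strings are bool lists; the structure B_w has universe {1..length w},
  the usual order, S = {i. w_i = 1} (i.e. w ! (i-1) = True), min = 1, max = length w.\<close>

datatype trm = Var nat | Min | Max

datatype form =
    Less trm trm
  | SAt trm
  | Eq trm trm
  | Neg form
  | Conj form form
  | Disj form form
  | Ex nat form
  | All nat form

fun tval :: "bool list \<Rightarrow> (nat \<Rightarrow> nat) \<Rightarrow> trm \<Rightarrow> nat" where
  "tval w e (Var x) = e x"
| "tval w e Min = 1"
| "tval w e Max = length w"

fun sat :: "bool list \<Rightarrow> (nat \<Rightarrow> nat) \<Rightarrow> form \<Rightarrow> bool" where
  "sat w e (Less s t) = (tval w e s < tval w e t)"
| "sat w e (SAt t) = (w ! (tval w e t - 1))"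
| "sat w e (Eq s t) = (tval w e s = tval w e t)"
| "sat w e (Neg f) = (\<not> sat w e f)"
| "sat w e (Conj f g) = (sat w e f \<and> sat w e g)"
| "sat w e (Disj f g) = (sat w e f \<or> sat w e g)"
| "sat w e (Ex x f) = (\<exists>i\<in>{1..length w}. sat w (e(x := i)) f)"
| "sat w e (All x f) = (\<forall>i\<in>{1..length w}. sat w (e(x := i)) f)"

fun tvars :: "trm \<Rightarrow> nat set" where
  "tvars (Var x) = {x}"
| "tvars Min = {}"
| "tvars Max = {}"

fun free_vars :: "form \<Rightarrow> nat set" where
  "free_vars (Less s t) = tvars s \<union> tvars t"
| "free_vars (SAt t) = tvars t"
| "free_vars (Eq s t) = tvars s \<union> tvars t"
| "free_vars (Neg f) = free_vars f"
| "free_vars (Conj f g) = free_vars f \<union> free_vars g"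
| "free_vars (Disj f g) = free_vars f \<union> free_vars g"
| "free_vars (Ex x f) = free_vars f - {x}"
| "free_vars (All x f) = free_vars f - {x}"

definition sentence :: "form \<Rightarrow> bool" where
  "sentence f \<longleftrightarrow> free_vars f = {}"

text \<open>Truth of a sentence in B_w (the assignment is irrelevant for sentences).\<close>
definition models :: "bool list \<Rightarrow> form \<Rightarrow> bool" where
  "models w f \<longleftrightarrow> sat w (\<lambda>_. 1) f"

fun qcount :: "form \<Rightarrow> nat" where
  "qcount (Less s t) = 0"
| "qcount (SAt t) = 0"
| "qcount (Eq s t) = 0"
| "qcount (Neg f) = qcount f"
| "qcount (Conj f g) = qcount f + qcount g"
| "qcount (Disj f g) = qcount f + qcount g"
| "qcount (Ex x f) = Suc (qcount f)"
| "qcount (All x f) = Suc (qcount f)"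

definition quantifier_free :: "form \<Rightarrow> bool" where
  "quantifier_free f \<longleftrightarrow> qcount f = 0"

datatype quant = QEx | QAll

fun qprefix :: "form \<Rightarrow> quant list" where
  "qprefix (Ex x f) = QEx # qprefix f"
| "qprefix (All x f) = QAll # qprefix f"
| "qprefix _ = []"

fun matrix :: "form \<Rightarrow> form" where
  "matrix (Ex x f) = matrix f"
| "matrix (All x f) = matrix f"
| "matrix f = f"

definition prenex :: "form \<Rightarrow> bool" where
  "prenex f \<longleftrightarrow> quantifier_free (matrix f)"

definition strictly_alternating :: "quant list \<Rightarrow> bool" where
  "strictly_alternating qs \<longleftrightarrow> (\<forall>i. Suc i < length qs \<longrightarrow> qs ! i \<noteq> qs ! Suc i)"

end

theory Submission
  imports Defs
begin

definition TT :: form where "TT = Eq Min Min"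
definition FF :: form where "FF = Neg (Eq Min Min)"
definition ite :: "form \<Rightarrow> form \<Rightarrow> form \<Rightarrow> form" where
  "ite G A B = Disj (Conj G A) (Conj (Neg G) B)"

fun pre :: "nat \<Rightarrow> bool \<Rightarrow> form \<Rightarrow> form" where
  "pre 0 q M = M"
| "pre (Suc m) q M = (if q then All m (pre m False M) else Ex m (pre m True M))"

lemma tval_cong: "(\<forall>x\<in>tvars t. e x = e' x) \<Longrightarrow> tval w e t = tval w e' t"
  by (cases t) auto

lemma sat_cong: "(\<forall>x\<in>free_vars f. e x = e' x) \<Longrightarrow> sat w e f = sat w e' f"
proof (induction f arbitrary: e e')
  case (Less s t) then show ?case using tval_cong[of s e e' w] tval_cong[of t e e' w] by simp
next
  case (SAt t) then show ?case using tval_cong[of t e e' w] by simp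
next
  case (Eq s t) then show ?case using tval_cong[of s e e' w] tval_cong[of t e e' w] by simp
next
  case (Ex x f)
  have "\<And>i. sat w (e(x:=i)) f = sat w (e'(x:=i)) f"
    by (rule Ex.IH) (use Ex.prems in auto)
  then show ?case by simp
next
  case (All x f)
  have "\<And>i. sat w (e(x:=i)) f = sat w (e'(x:=i)) f"
    by (rule All.IH) (use All.prems in auto)
  then show ?case by simp
next
  case (Neg f) then show ?case by simp
next
  case (Conj f1 f2)
  have "sat w e f1 = sat w e' f1" "sat w e f2 = sat w e' f2"
    by (rule Conj.IH; use Conj.prems in auto)+
  then show ?case by simp
next
  case (Disj f1 f2)
  have "sat w e f1 = sat w e' f1" "sat w e f2 = sat w e' f2"
    by (rule Disj.IH; use Disj.prems in auto)+
  then show ?case by simp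
qed

lemma sat_upd: "x \<notin> free_vars f \<Longrightarrow> sat w (e(x:=i)) f = sat w e f"
  by (rule sat_cong) auto

lemma tval_upd: "x \<notin> tvars t \<Longrightarrow> tval w (e(x:=i)) t = tval w e t"
  by (rule tval_cong) auto

lemma pre_ite: "free_vars G \<inter> {..<m} = {} \<Longrightarrow>
  sat w e (pre m q (ite G A B)) = (if sat w e G then sat w e (pre m q A) else sat w e (pre m q B))"
proof (induction m arbitrary: q e)
  case 0 then show ?case by (simp add: ite_def)
next
  case (Suc m)
  have d: "free_vars G \<inter> {..<m} = {}" using Suc.prems by auto
  note IH = Suc.IH[OF d]
  have g: "\<And>i. sat w (e(m:=i)) G = sat w e G" using Suc.prems by (intro sat_upd) auto
  show ?case by (cases q) (simp_all add: IH g del: fun_upd_apply)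
qed

lemma pre_qf: "free_vars M \<inter> {..<m} = {} \<Longrightarrow> length w \<ge> 1 \<Longrightarrow> sat w e (pre m q M) = sat w e M"
proof (induction m arbitrary: q e)
  case 0 then show ?case by simp
next
  case (Suc m)
  have d: "free_vars M \<inter> {..<m} = {}" using Suc.prems by auto
  note IH = Suc.IH[OF d Suc.prems(2)]
  have g: "\<And>i. sat w (e(m:=i)) M = sat w e M" using Suc.prems by (intro sat_upd) auto
  have ne: "{1..length w} \<noteq> {}" using Suc.prems by auto
  show ?case using ne by (cases q) (auto simp add: IH g simp del: fun_upd_apply)
qed

lemma pre_neg: "sat w e (pre m q (Neg M)) = (\<not> sat w e (pre m (\<not>q) M))"
  by (induction m arbitrary: q e) auto

fun BO :: "nat \<Rightarrow> nat" and BA :: "nat \<Rightarrow> nat" where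
  "BO 0 = 0" | "BO (Suc m) = 2 * BA m"
| "BA 0 = 0" | "BA (Suc m) = 2 * BO m + 1"

fun ORm :: "nat \<Rightarrow> trm \<Rightarrow> trm \<Rightarrow> trm \<Rightarrow> nat \<Rightarrow> nat \<Rightarrow> form"
and ANDm :: "nat \<Rightarrow> trm \<Rightarrow> trm \<Rightarrow> trm \<Rightarrow> nat \<Rightarrow> nat \<Rightarrow> form" where
  "ORm 0 a u b h g = Disj (Neg (Less a u)) (Neg (Less u b))"
| "ORm (Suc m) a u b h g = ite (Neg (Less u b)) TT
     (ite (Neg (Less u (Var m))) (ANDm m a (Var m) u (h div 2) (h - h div 2))
                                 (ANDm m u (Var m) b (g - g div 2) (g div 2)))"
| "ANDm 0 a y b h g = Conj (Neg (Less a y)) (Neg (Less y b))"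
| "ANDm (Suc m) a y b h g = ite (Neg (Less y (Var m)))
     (if h = 0 then Neg (Less a y) else ORm m a (Var m) y ((h-1) div 2) (h - 1 - (h-1) div 2))
     (if g = 0 then Neg (Less y b) else ORm m y (Var m) b ((g-1) div 2) (g - 1 - (g-1) div 2))"

definition ok :: "nat \<Rightarrow> trm \<Rightarrow> bool" where "ok m t \<longleftrightarrow> (\<forall>j\<in>tvars t. m \<le> j)"
definition inr :: "bool list \<Rightarrow> (nat \<Rightarrow> nat) \<Rightarrow> trm \<Rightarrow> bool" where
  "inr w e t \<longleftrightarrow> 1 \<le> tval w e t \<and> tval w e t \<le> length w"

lemma arith_or:
  fixes A U B n h g :: nat
  assumes "1 \<le> A" "A \<le> n" "1 \<le> U" "U \<le> n" "1 \<le> B" "B \<le> n"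
  shows "(\<exists>i\<in>{1..n}. if \<not> U < B then True else if i \<le> U then (i \<le> A + h div 2 \<and> U \<le> i + (h - h div 2))
           else (i \<le> U + (g - g div 2) \<and> B \<le> i + g div 2)) \<longleftrightarrow> (U \<le> A + h \<or> B \<le> U + g)"
proof
  assume "\<exists>i\<in>{1..n}. if \<not> U < B then True else if i \<le> U then (i \<le> A + h div 2 \<and> U \<le> i + (h - h div 2))
           else (i \<le> U + (g - g div 2) \<and> B \<le> i + g div 2)"
  then obtain i where "i\<in>{1..n}" and H: "if \<not> U < B then True else if i \<le> U then (i \<le> A + h div 2 \<and> U \<le> i + (h - h div 2))
           else (i \<le> U + (g - g div 2) \<and> B \<le> i + g div 2)" by blast
  then show "U \<le> A + h \<or> B \<le> U + g" by (auto split: if_splits)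
next
  assume R: "U \<le> A + h \<or> B \<le> U + g"
  show "\<exists>i\<in>{1..n}. if \<not> U < B then True else if i \<le> U then (i \<le> A + h div 2 \<and> U \<le> i + (h - h div 2))
           else (i \<le> U + (g - g div 2) \<and> B \<le> i + g div 2)"
  proof (cases "U < B")
    case False then show ?thesis using assms by (intro bexI[of _ 1]) auto
  next
    case True
    show ?thesis
    proof (cases "U \<le> A + h")
      case c: True
      show ?thesis using assms True c by (intro bexI[of _ "min U (A + h div 2)"]) auto
    next
      case c: False
      then have "B \<le> U + g" using R by auto
      then show ?thesis using assms True c by (intro bexI[of _ "min B (U + (g - g div 2))"]) auto
    qed
  qed
qed

lemma arith_and:
  fixes A Y B n h g :: nat
  assumes "1 \<le> A" "A \<le> n" "1 \<le> Y" "Y \<le> n" "1 \<le> B" "B \<le> n"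
  shows "(\<forall>i\<in>{1..n}. if i \<le> Y then (if h = 0 then Y \<le> A else (i \<le> A + (h-1) div 2 \<or> Y \<le> i + (h - 1 - (h-1) div 2)))
          else (if g = 0 then B \<le> Y else (i \<le> Y + (g-1) div 2 \<or> B \<le> i + (g - 1 - (g-1) div 2))))
        \<longleftrightarrow> (Y \<le> A + h \<and> B \<le> Y + g)"
proof
  assume H: "\<forall>i\<in>{1..n}. if i \<le> Y then (if h = 0 then Y \<le> A else (i \<le> A + (h-1) div 2 \<or> Y \<le> i + (h - 1 - (h-1) div 2)))
          else (if g = 0 then B \<le> Y else (i \<le> Y + (g-1) div 2 \<or> B \<le> i + (g - 1 - (g-1) div 2)))"
  have 1: "Y \<le> A + h"
  proof (rule ccontr)
    assume n: "\<not> Y \<le> A + h"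
    show False
    proof (cases "h = 0")
      case True then show False using H[rule_format, of 1] assms n by auto
    next
      case False
      have le: "A + (h-1) div 2 + 1 \<le> A + h" using False by simp
      have mem: "A + (h-1) div 2 + 1 \<in> {1..n}" using le n assms by auto
      note Hi = H[rule_format, OF mem]
      have "A + (h-1) div 2 + 1 \<le> A + (h-1) div 2 \<or> Y \<le> A + (h-1) div 2 + 1 + (h - 1 - (h-1) div 2)"
        using Hi le n False by (simp split: if_splits)
      then show False using n False by simp
    qed
  qed
  have 2: "B \<le> Y + g"
  proof (rule ccontr)
    assume n: "\<not> B \<le> Y + g"
    show False
    proof (cases "g = 0")
      case True then show False using H[rule_format, of B] assms n by auto
    next
      case False
      have le: "Y + (g-1) div 2 + 1 \<le> Y + g" using False by simp
      have mem: "Y + (g-1) div 2 + 1 \<in> {1..n}" using le n assms by auto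
      note Hi = H[rule_format, OF mem]
      have "Y + (g-1) div 2 + 1 \<le> Y + (g-1) div 2 \<or> B \<le> Y + (g-1) div 2 + 1 + (g - 1 - (g-1) div 2)"
        using Hi le n False by (simp split: if_splits)
      then show False using n False by simp
    qed
  qed
  show "Y \<le> A + h \<and> B \<le> Y + g" using 1 2 by auto
next
  assume "Y \<le> A + h \<and> B \<le> Y + g"
  then show "\<forall>i\<in>{1..n}. if i \<le> Y then (if h = 0 then Y \<le> A else (i \<le> A + (h-1) div 2 \<or> Y \<le> i + (h - 1 - (h-1) div 2)))
          else (if g = 0 then B \<le> Y else (i \<le> Y + (g-1) div 2 \<or> B \<le> i + (g - 1 - (g-1) div 2)))"
    by auto
qed

lemma ok_Suc: "ok (Suc m) t \<Longrightarrow> ok m t" by (auto simp: ok_def)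
lemma ok_notin: "ok (Suc m) t \<Longrightarrow> m \<notin> tvars t" by (auto simp: ok_def)
lemma ok_disj: "ok m t \<Longrightarrow> tvars t \<inter> {..<m} = {}" by (auto simp: ok_def)

lemma corr:
  assumes len: "length w \<ge> 1"
  shows "(\<forall>a u b h g e. h \<le> BO m \<longrightarrow> g \<le> BO m \<longrightarrow> ok m a \<longrightarrow> ok m u \<longrightarrow> ok m b \<longrightarrow>
            inr w e a \<longrightarrow> inr w e u \<longrightarrow> inr w e b \<longrightarrow>
            (sat w e (pre m False (ORm m a u b h g)) \<longleftrightarrow>
               (tval w e u \<le> tval w e a + h \<or> tval w e b \<le> tval w e u + g)))
       \<and> (\<forall>a y b h g e. h \<le> BA m \<longrightarrow> g \<le> BA m \<longrightarrow> ok m a \<longrightarrow> ok m y \<longrightarrow> ok m b \<longrightarrow>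
            inr w e a \<longrightarrow> inr w e y \<longrightarrow> inr w e b \<longrightarrow>
            (sat w e (pre m True (ANDm m a y b h g)) \<longleftrightarrow>
               (tval w e y \<le> tval w e a + h \<and> tval w e b \<le> tval w e y + g)))"
proof (induction m)
  case 0
  show ?case by auto
next
  case (Suc m)
  have IHO: "\<And>a u b h g e. h \<le> BO m \<Longrightarrow> g \<le> BO m \<Longrightarrow> ok m a \<Longrightarrow> ok m u \<Longrightarrow> ok m b \<Longrightarrow>
            inr w e a \<Longrightarrow> inr w e u \<Longrightarrow> inr w e b \<Longrightarrow>
            (sat w e (pre m False (ORm m a u b h g)) \<longleftrightarrow>
               (tval w e u \<le> tval w e a + h \<or> tval w e b \<le> tval w e u + g))"
    using Suc.IH by blast
  have IHA: "\<And>a y b h g e. h \<le> BA m \<Longrightarrow> g \<le> BA m \<Longrightarrow> ok m a \<Longrightarrow> ok m y \<Longrightarrow> ok m b \<Longrightarrow>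
            inr w e a \<Longrightarrow> inr w e y \<Longrightarrow> inr w e b \<Longrightarrow>
            (sat w e (pre m True (ANDm m a y b h g)) \<longleftrightarrow>
               (tval w e y \<le> tval w e a + h \<and> tval w e b \<le> tval w e y + g))"
    using Suc.IH by blast
  have okV: "ok m (Var m)" by (simp add: ok_def)
  have inrV: "\<And>e i. i \<in> {1..length w} \<Longrightarrow> inr w (e(m:=i)) (Var m)" by (simp add: inr_def)
  have inrU: "\<And>e i t. ok (Suc m) t \<Longrightarrow> inr w e t \<Longrightarrow> inr w (e(m:=i)) t"
    by (simp add: inr_def tval_upd ok_notin)
  show ?case
  proof (intro conjI allI impI)
    fix a u b h g e
    assume h: "h \<le> BO (Suc m)" and g: "g \<le> BO (Suc m)" and oa: "ok (Suc m) a" and ou: "ok (Suc m) u"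
      and ob: "ok (Suc m) b" and ia: "inr w e a" and iu: "inr w e u" and ib: "inr w e b"
    define A U B where "A = tval w e a" "U = tval w e u" "B = tval w e b"
    have vals: "\<And>i. tval w (e(m:=i)) a = A" "\<And>i. tval w (e(m:=i)) u = U" "\<And>i. tval w (e(m:=i)) b = B"
      using oa ou ob by (simp_all add: A_U_B_def tval_upd ok_notin)
    have inner: "\<And>i. i \<in> {1..length w} \<Longrightarrow>
       sat w (e(m:=i)) (pre m True (ite (Neg (Less u b)) TT
     (ite (Neg (Less u (Var m))) (ANDm m a (Var m) u (h div 2) (h - h div 2))
                                 (ANDm m u (Var m) b (g - g div 2) (g div 2)))))
       = (if \<not> U < B then True else if i \<le> U then (i \<le> A + h div 2 \<and> U \<le> i + (h - h div 2))
           else (i \<le> U + (g - g div 2) \<and> B \<le> i + g div 2))"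
    proof -
      fix i assume i: "i \<in> {1..length w}"
      have f1: "free_vars (Neg (Less u b)) \<inter> {..<m} = {}" using ou ob by (auto simp: ok_def)
      have f2: "free_vars (Neg (Less u (Var m))) \<inter> {..<m} = {}" using ou by (auto simp: ok_def)
      have fT: "free_vars TT \<inter> {..<m} = {}" by (simp add: TT_def)
      have hh: "h div 2 \<le> BA m" "h - h div 2 \<le> BA m" using h by auto
      have gg: "g - g div 2 \<le> BA m" "g div 2 \<le> BA m" using g by auto
      have a1: "sat w (e(m:=i)) (pre m True (ANDm m a (Var m) u (h div 2) (h - h div 2)))
          = (i \<le> A + h div 2 \<and> U \<le> i + (h - h div 2))"
        using IHA[OF hh ok_Suc[OF oa] okV ok_Suc[OF ou] inrU[OF oa ia] inrV[OF i] inrU[OF ou iu]] vals by simp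
      have a2: "sat w (e(m:=i)) (pre m True (ANDm m u (Var m) b (g - g div 2) (g div 2)))
          = (i \<le> U + (g - g div 2) \<and> B \<le> i + g div 2)"
        using IHA[OF gg ok_Suc[OF ou] okV ok_Suc[OF ob] inrU[OF ou iu] inrV[OF i] inrU[OF ob ib]] vals by simp
      show "?thesis i"
      proof -
        have tt: "sat w (e(m:=i)) (pre m True TT)" using pre_qf[OF fT len, of "e(m:=i)" True] by (simp add: TT_def)
        show ?thesis
          by (simp add: pre_ite[OF f1] pre_ite[OF f2] tt a1 a2 vals not_less fun_upd_same del: fun_upd_apply)
      qed
    qed
    have "sat w e (pre (Suc m) False (ORm (Suc m) a u b h g)) =
       (\<exists>i\<in>{1..length w}. if \<not> U < B then True else if i \<le> U then (i \<le> A + h div 2 \<and> U \<le> i + (h - h div 2))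
           else (i \<le> U + (g - g div 2) \<and> B \<le> i + g div 2))"
      using inner by (simp del: fun_upd_apply)
    also have "\<dots> = (U \<le> A + h \<or> B \<le> U + g)"
      by (rule arith_or) (use ia iu ib in \<open>auto simp: inr_def A_U_B_def\<close>)
    finally show "sat w e (pre (Suc m) False (ORm (Suc m) a u b h g)) =
       (tval w e u \<le> tval w e a + h \<or> tval w e b \<le> tval w e u + g)" by (simp add: A_U_B_def)
  next
    fix a y b h g e
    assume h: "h \<le> BA (Suc m)" and g: "g \<le> BA (Suc m)" and oa: "ok (Suc m) a" and oy: "ok (Suc m) y"
      and ob: "ok (Suc m) b" and ia: "inr w e a" and iy: "inr w e y" and ib: "inr w e b"
    define A Y B where "A = tval w e a" "Y = tval w e y" "B = tval w e b"
    have vals: "\<And>i. tval w (e(m:=i)) a = A" "\<And>i. tval w (e(m:=i)) y = Y" "\<And>i. tval w (e(m:=i)) b = B"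
      using oa oy ob by (simp_all add: A_Y_B_def tval_upd ok_notin)
    have inner: "\<And>i. i \<in> {1..length w} \<Longrightarrow>
       sat w (e(m:=i)) (pre m False (ite (Neg (Less y (Var m)))
     (if h = 0 then Neg (Less a y) else ORm m a (Var m) y ((h-1) div 2) (h - 1 - (h-1) div 2))
     (if g = 0 then Neg (Less y b) else ORm m y (Var m) b ((g-1) div 2) (g - 1 - (g-1) div 2))))
       = (if i \<le> Y then (if h = 0 then Y \<le> A else (i \<le> A + (h-1) div 2 \<or> Y \<le> i + (h - 1 - (h-1) div 2)))
          else (if g = 0 then B \<le> Y else (i \<le> Y + (g-1) div 2 \<or> B \<le> i + (g - 1 - (g-1) div 2))))"
    proof -
      fix i assume i: "i \<in> {1..length w}"
      have f2: "free_vars (Neg (Less y (Var m))) \<inter> {..<m} = {}" using oy by (auto simp: ok_def)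
      have fa: "free_vars (Neg (Less a y)) \<inter> {..<m} = {}" using oa oy by (auto simp: ok_def)
      have fb: "free_vars (Neg (Less y b)) \<inter> {..<m} = {}" using ob oy by (auto simp: ok_def)
      have hh: "(h-1) div 2 \<le> BO m" "h - 1 - (h-1) div 2 \<le> BO m" using h by auto
      have gg: "(g-1) div 2 \<le> BO m" "g - 1 - (g-1) div 2 \<le> BO m" using g by auto
      have o1: "sat w (e(m:=i)) (pre m False (ORm m a (Var m) y ((h-1) div 2) (h - 1 - (h-1) div 2)))
          = (i \<le> A + (h-1) div 2 \<or> Y \<le> i + (h - 1 - (h-1) div 2))"
        using IHO[OF hh ok_Suc[OF oa] okV ok_Suc[OF oy] inrU[OF oa ia] inrV[OF i] inrU[OF oy iy]] vals by simp
      have o2: "sat w (e(m:=i)) (pre m False (ORm m y (Var m) b ((g-1) div 2) (g - 1 - (g-1) div 2)))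
          = (i \<le> Y + (g-1) div 2 \<or> B \<le> i + (g - 1 - (g-1) div 2))"
        using IHO[OF gg ok_Suc[OF oy] okV ok_Suc[OF ob] inrU[OF oy iy] inrV[OF i] inrU[OF ob ib]] vals by simp
      show "?thesis i"
        using o1 o2 by (simp add: pre_ite[OF f2] pre_qf[OF fa len] pre_qf[OF fb len] vals not_less fun_upd_same del: fun_upd_apply)
    qed
    have "sat w e (pre (Suc m) True (ANDm (Suc m) a y b h g)) =
       (\<forall>i\<in>{1..length w}. if i \<le> Y then (if h = 0 then Y \<le> A else (i \<le> A + (h-1) div 2 \<or> Y \<le> i + (h - 1 - (h-1) div 2)))
          else (if g = 0 then B \<le> Y else (i \<le> Y + (g-1) div 2 \<or> B \<le> i + (g - 1 - (g-1) div 2))))"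
      using inner by (simp del: fun_upd_apply)
    also have "\<dots> = (Y \<le> A + h \<and> B \<le> Y + g)"
      by (rule arith_and) (use ia iy ib in \<open>auto simp: inr_def A_Y_B_def\<close>)
    finally show "sat w e (pre (Suc m) True (ANDm (Suc m) a y b h g)) =
       (tval w e y \<le> tval w e a + h \<and> tval w e b \<le> tval w e y + g)" by (simp add: A_Y_B_def)
  qed
qed

lemma qc_ORAND: "qcount (ORm m a u b h g) = 0 \<and> qcount (ANDm m a u b h g) = 0"
proof (induction m arbitrary: a u b h g)
  case 0 then show ?case by simp
next
  case (Suc m)
  have "\<And>a u b h g. qcount (ORm m a u b h g) = 0" "\<And>a u b h g. qcount (ANDm m a u b h g) = 0"
    using Suc by blast+
  then show ?case by (simp add: ite_def TT_def)
qed

lemma fv_ORAND: "free_vars (ORm m a u b h g) \<subseteq> tvars a \<union> tvars u \<union> tvars b \<union> {..<m} \<and>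
                 free_vars (ANDm m a u b h g) \<subseteq> tvars a \<union> tvars u \<union> tvars b \<union> {..<m}"
proof (induction m arbitrary: a u b h g)
  case 0 then show ?case by auto
next
  case (Suc m)
  have o: "\<And>a u b h g. free_vars (ORm m a u b h g) \<subseteq> tvars a \<union> tvars u \<union> tvars b \<union> {..<m}"
   and n: "\<And>a u b h g. free_vars (ANDm m a u b h g) \<subseteq> tvars a \<union> tvars u \<union> tvars b \<union> {..<m}"
    using Suc by blast+
  have s: "{..<m} \<subseteq> {..<Suc m}" "{m} \<subseteq> {..<Suc m}" by auto
  have 1: "free_vars (ORm (Suc m) a u b h g) \<subseteq> tvars a \<union> tvars u \<union> tvars b \<union> {..<Suc m}"
    using n[of a "Var m" u "h div 2" "h - h div 2"] n[of u "Var m" b "g - g div 2" "g div 2"]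
    by (simp add: ite_def TT_def lessThan_Suc) blast
  have 2: "free_vars (ANDm (Suc m) a u b h g) \<subseteq> tvars a \<union> tvars u \<union> tvars b \<union> {..<Suc m}"
    using o[of a "Var m" u "(h-1) div 2" "h - 1 - (h-1) div 2"] o[of u "Var m" b "(g-1) div 2" "g - 1 - (g-1) div 2"]
    by (simp add: ite_def lessThan_Suc) blast
  show ?case using 1 2 by simp
qed

lemma alt_map: "strictly_alternating (map (\<lambda>i. if even i = q then QAll else QEx) [0..<m])"
  unfolding strictly_alternating_def
proof (intro allI impI)
  fix i assume "Suc i < length (map (\<lambda>i. if even i = q then QAll else QEx) [0..<m])"
  then have "Suc i < m" by simp
  then show "map (\<lambda>i. if even i = q then QAll else QEx) [0..<m] ! i \<noteq> map (\<lambda>i. if even i = q then QAll else QEx) [0..<m] ! Suc i"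
    by (simp add: nth_map_upt)
qed


lemma fv_pre: "free_vars (pre m q M) = free_vars M - {..<m}"
  by (induction m arbitrary: q) auto

lemma qc_pre: "qcount (pre m q M) = m + qcount M"
  by (induction m arbitrary: q) auto

lemma qc0_prefix: "qcount M = 0 \<Longrightarrow> qprefix M = [] \<and> matrix M = M"
  by (cases M) auto

lemma prefix_pre: "qprefix M = [] \<Longrightarrow> qprefix (pre m q M) = map (\<lambda>i. if even i = q then QAll else QEx) [0..<m]"
proof (induction m arbitrary: q)
  case 0 then show ?case by simp
next
  case (Suc m)
  show ?case using Suc by (simp add: map_upt_Suc del: upt_Suc)
qed

lemma matrix_pre: "matrix (pre m q M) = matrix M"
  by (induction m arbitrary: q) auto


lemma BA_step: "BA (Suc (Suc m)) = 4 * BA m + 1" by simp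

lemma BA_bound: "2^m \<le> 3 * BA m + 1"
proof (induction m rule: less_induct)
  case (less m)
  show ?case
  proof (cases m)
    case 0 then show ?thesis by simp
  next
    case (Suc k) note k = this
    show ?thesis
    proof (cases k)
      case 0 then show ?thesis using k by simp
    next
      case (Suc j)
      have "2^j \<le> 3 * BA j + 1" using less k Suc by simp
      then show ?thesis using k Suc by simp
    qed
  qed
qed

lemma exm: assumes "n \<ge> (1::nat)" shows "\<exists>m. (odd m = p) \<and> 3*n \<le> 2^m \<and> 2^m \<le> 12*n"
proof -
  have ex: "\<exists>m. 3*n \<le> 2^m" using less_exp[of "3*n"] by (intro exI[of _ "3*n"]) simp
  define m0 where "m0 = (LEAST m. 3*n \<le> (2::nat)^m)"
  have m0: "3*n \<le> 2^m0" unfolding m0_def by (rule LeastI_ex[OF ex])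
  have "m0 \<noteq> 0" using m0 assms by (intro notI) simp
  then obtain k where k: "m0 = Suc k" by (cases m0) auto
  have "\<not> 3*n \<le> 2^k" using not_less_Least[of k "\<lambda>m. 3*n \<le> (2::nat)^m"] k m0_def by simp
  then have m0u: "2^m0 \<le> 6*n" using k by simp
  show ?thesis
  proof (cases "odd m0 = p")
    case True then show ?thesis using m0 m0u by (intro exI[of _ m0]) simp
  next
    case False then show ?thesis using m0 m0u by (intro exI[of _ "Suc m0"]) simp
  qed
qed

lemma logb: assumes "2^m \<le> 12*n" "n \<ge> (1::nat)" shows "real m \<le> log 2 (real n) + 4"
proof -
  have "real m = log 2 (2^m)" by (simp add: log_nat_power)
  also have "\<dots> \<le> log 2 (12 * real n)"
  proof -
    have "(2::real)^m \<le> 12 * real n" using assms(1) by (metis of_nat_le_iff of_nat_mult of_nat_numeral of_nat_power)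
    then show ?thesis by (intro log_le_cancel_iff[THEN iffD2]) (use assms in auto)
  qed
  also have "\<dots> = log 2 12 + log 2 (real n)" using assms by (simp add: log_mult)
  also have "log 2 12 \<le> (4::real)"
  proof -
    have "log 2 12 \<le> log 2 (16::real)" by (intro log_le_cancel_iff[THEN iffD2]) auto
    also have "log 2 (16::real) = 4"
      using log_nat_power[of 2 2 4] by simp
    finally show ?thesis .
  qed
  finally show ?thesis by simp
qed


definition fA :: "bool \<Rightarrow> nat \<Rightarrow> quant" where "fA q i = (if even i = q then QAll else QEx)"

lemma pre_props:
  assumes "qcount M = 0" "free_vars M \<subseteq> {..<m}"
  shows "sentence (pre m q M) \<and> prenex (pre m q M) \<and> qcount (pre m q M) = m \<and>
         qprefix (pre m q M) = map (fA q) [0..<m]"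
proof -
  have "qprefix M = []" "matrix M = M" using qc0_prefix[OF assms(1)] by auto
  then show ?thesis using assms
    by (auto simp: sentence_def fv_pre prenex_def matrix_pre quantifier_free_def qc_pre prefix_pre fA_def[abs_def])
qed

lemma last_fA: "m \<ge> 1 \<Longrightarrow> last (map (fA q) [0..<m]) = fA q (m - 1)"
  by (cases m) (auto simp: last_map)

lemma corr_and:
  assumes "length v \<ge> 1" "h \<le> BA m" "g \<le> BA m" "ok m a" "ok m y" "ok m b" "inr v e a" "inr v e y" "inr v e b"
  shows "sat v e (pre m True (ANDm m a y b h g)) \<longleftrightarrow> (tval v e y \<le> tval v e a + h \<and> tval v e b \<le> tval v e y + g)"
  using corr[OF assms(1), of m] assms by blast

lemma okMM: "ok m Min" "ok m Max" by (auto simp: ok_def)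
lemma inrMM: "length v \<ge> 1 \<Longrightarrow> inr v e Min" "length v \<ge> 1 \<Longrightarrow> inr v e Max" by (auto simp: inr_def)

lemma BA_ge: "3 * n \<le> 2^m \<Longrightarrow> n \<le> BA m"
  using BA_bound[of m] by linarith

theorem mainTheorem8:
  shows "\<exists>C::real. \<forall>(w::bool list) (w'::bool list).
           length w \<ge> 1 \<longrightarrow> length w' \<ge> 1 \<longrightarrow> w' \<noteq> w \<longrightarrow>
           (\<exists>\<phi>. sentence \<phi> \<and> prenex \<phi> \<and>
                 real (qcount \<phi>) \<le> log 2 (real (length w)) + C \<and>
                 strictly_alternating (qprefix \<phi>) \<and>
                 qprefix \<phi> \<noteq> [] \<and> last (qprefix \<phi>) = QAll \<and>
                 models w \<phi> \<and> \<not> models w' \<phi>)"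
proof (intro exI[of _ 5] allI impI)
  fix w w' :: "bool list"
  assume l1: "length w \<ge> 1" and l2: "length w' \<ge> 1" and ne: "w' \<noteq> w"
  define n where "n = length w"
  have n1: "n \<ge> 1" using l1 n_def by simp
  define e0 :: "nat \<Rightarrow> nat" where "e0 = (\<lambda>_. 1)"
  have alt: "\<And>q m. strictly_alternating (map (fA q) [0..<m])" using alt_map by (simp add: fA_def[abs_def])
  consider (A) "n < length w'" | (B) "length w' < n" | (C) "length w' = n" by linarith
  then show "\<exists>\<phi>. sentence \<phi> \<and> prenex \<phi> \<and>
                 real (qcount \<phi>) \<le> log 2 (real (length w)) + 5 \<and>
                 strictly_alternating (qprefix \<phi>) \<and>
                 qprefix \<phi> \<noteq> [] \<and> last (qprefix \<phi>) = QAll \<and>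
                 models w \<phi> \<and> \<not> models w' \<phi>"
  proof cases
    case A
    obtain m where mo: "odd m = True" and m1: "3*n \<le> 2^m" and m2: "2^m \<le> 12*n" using exm[OF n1] by blast
    have ba: "n - 1 \<le> BA m" "0 \<le> BA m" using BA_ge[OF m1] by auto
    define M where "M = ANDm m Min Max Max (n - 1) 0"
    have qM: "qcount M = 0" using qc_ORAND M_def by simp
    have fM: "free_vars M \<subseteq> {..<m}" using fv_ORAND[of m Min Max Max "n-1" 0] M_def by simp
    note P = pre_props[OF qM fM, of True]
    have sem: "\<And>v. length v \<ge> 1 \<Longrightarrow> models v (pre m True M) \<longleftrightarrow> length v \<le> 1 + (n - 1)"
    proof -
      fix v :: "bool list" assume lv: "length v \<ge> 1"
      show "?thesis v"
        unfolding models_def M_def using corr_and[OF lv ba(1) ba(2) okMM(1) okMM(2) okMM(2) inrMM(1)[OF lv] inrMM(2)[OF lv] inrMM(2)[OF lv]]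
        by simp
    qed
    have lg: "real m \<le> log 2 (real n) + 4" using logb[OF m2 n1] .
    have m_ge: "m \<ge> 1" using mo by (cases m) auto
    show ?thesis
    proof (intro exI[of _ "pre m True M"] conjI)
      show "last (qprefix (pre m True M)) = QAll" using P last_fA[OF m_ge] mo by (simp add: fA_def)
      show "qprefix (pre m True M) \<noteq> []" using P m_ge by simp
      show "models w (pre m True M)" using sem[OF l1] n_def n1 by simp
      show "\<not> models w' (pre m True M)" using sem[OF l2] A n1 by simp
      show "real (qcount (pre m True M)) \<le> log 2 (real (length w)) + 5" using P lg n_def by simp
    qed (use P alt in auto)
  next
    case B
    obtain m where mo: "odd m = False" and m1: "3*n \<le> 2^m" and m2: "2^m \<le> 12*n" using exm[OF n1] by blast
    have ba: "n - 2 \<le> BA m" "0 \<le> BA m" using BA_ge[OF m1] by auto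
    define M where "M = ANDm m Min Max Max (n - 2) 0"
    have qM: "qcount (Neg M) = 0" using qc_ORAND M_def by simp
    have fM: "free_vars (Neg M) \<subseteq> {..<m}" using fv_ORAND[of m Min Max Max "n-2" 0] M_def by simp
    note P = pre_props[OF qM fM, of False]
    have sem: "\<And>v. length v \<ge> 1 \<Longrightarrow> models v (pre m False (Neg M)) \<longleftrightarrow> \<not> length v \<le> 1 + (n - 2)"
    proof -
      fix v :: "bool list" assume lv: "length v \<ge> 1"
      show "?thesis v"
        unfolding models_def M_def pre_neg using corr_and[OF lv ba(1) ba(2) okMM(1) okMM(2) okMM(2) inrMM(1)[OF lv] inrMM(2)[OF lv] inrMM(2)[OF lv]]
        by simp
    qed
    have lg: "real m \<le> log 2 (real n) + 4" using logb[OF m2 n1] .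
    have m_ge: "m \<ge> 2"
    proof (rule ccontr)
      assume "\<not> m \<ge> 2" then have "m \<le> 1" by simp
      then have "(2::nat)^m \<le> 2^1" by (intro power_increasing) auto
      then show False using m1 n1 by simp
    qed
    have n2: "n \<ge> 2" using B l2 by simp
    show ?thesis
    proof (intro exI[of _ "pre m False (Neg M)"] conjI)
      show "last (qprefix (pre m False (Neg M))) = QAll" using P last_fA[of m False] m_ge mo by (simp add: fA_def)
      show "qprefix (pre m False (Neg M)) \<noteq> []" using P m_ge by simp
      show "models w (pre m False (Neg M))" using sem[OF l1] n_def n2 by simp
      show "\<not> models w' (pre m False (Neg M))" using sem[OF l2] B n2 by simp
      show "real (qcount (pre m False (Neg M))) \<le> log 2 (real (length w)) + 5" using P lg n_def by simp
    qed (use P alt in auto)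
  next
    case C
    have "\<exists>i<n. w ! i \<noteq> w' ! i"
    proof (rule ccontr)
      assume "\<not> (\<exists>i<n. w ! i \<noteq> w' ! i)"
      then have "w' = w" using C n_def by (intro nth_equalityI) auto
      then show False using ne by simp
    qed
    then obtain i where i: "i < n" and d: "w ! i \<noteq> w' ! i" by blast
    obtain m where mo: "odd m = True" and m1: "3*n \<le> 2^m" and m2: "2^m \<le> 12*n" using exm[OF n1] by blast
    have ba: "i \<le> BA m" "n - 1 - i \<le> BA m" using BA_ge[OF m1] i by auto
    define L where "L = (if w ! i then SAt (Var m) else Neg (SAt (Var m)))"
    define A where "A = ANDm m Min (Var m) Max i (n - 1 - i)"
    define M where "M = ite L A FF"
    have qM: "qcount M = 0" using qc_ORAND[of m Min "Var m" Max i "n - 1 - i"]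
      by (simp add: M_def A_def L_def ite_def FF_def)
    have fA': "free_vars A \<subseteq> {..<Suc m}" using fv_ORAND[of m Min "Var m" Max i "n - 1 - i"] A_def
      by (auto simp: lessThan_Suc)
    have fM: "free_vars M \<subseteq> {..<Suc m}" using fA' by (auto simp: M_def ite_def L_def FF_def)
    note P = pre_props[OF qM fM, of False]
    have fL: "free_vars L \<inter> {..<m} = {}" by (auto simp: L_def)
    have fFF: "free_vars FF \<inter> {..<m} = {}" by (auto simp: FF_def)
    have sem: "\<And>v. length v = n \<Longrightarrow> models v (pre (Suc m) False M) \<longleftrightarrow> (if w ! i then v ! i else \<not> v ! i)"
    proof -
      fix v :: "bool list" assume lv: "length v = n"
      have lv1: "length v \<ge> 1" using lv n1 by simp
      have inner: "\<And>x. x \<in> {1..n} \<Longrightarrow> sat v (e0(m:=x)) (pre m True M) \<longleftrightarrow> (x = i + 1 \<and> sat v (e0(m:=x)) L)"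
      proof -
        fix x assume x: "x \<in> {1..n}"
        have ff: "\<not> sat v (e0(m:=x)) (pre m True FF)" using pre_qf[OF fFF lv1, of "e0(m:=x)" True]
          by (simp add: FF_def)
        have inrV: "inr v (e0(m:=x)) (Var m)" using x lv by (simp add: inr_def)
        have okV: "ok m (Var m)" by (simp add: ok_def)
        have a: "sat v (e0(m:=x)) (pre m True A) \<longleftrightarrow> (x \<le> 1 + i \<and> n \<le> x + (n - 1 - i))"
          unfolding A_def using corr_and[OF lv1 ba(1) ba(2) okMM(1) okV okMM(2) inrMM(1)[OF lv1] inrV inrMM(2)[OF lv1]] lv
          by simp
        have "x \<le> 1 + i \<and> n \<le> x + (n - 1 - i) \<longleftrightarrow> x = i + 1" using i by auto
        then show "?thesis x" unfolding M_def using pre_ite[OF fL] a ff by auto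
      qed
      have "models v (pre (Suc m) False M) \<longleftrightarrow> (\<exists>x\<in>{1..n}. sat v (e0(m:=x)) (pre m True M))"
        unfolding models_def e0_def using lv by (simp del: fun_upd_apply)
      also have "\<dots> \<longleftrightarrow> sat v (e0(m:= i + 1)) L" using inner i by auto
      also have "\<dots> \<longleftrightarrow> (if w ! i then v ! i else \<not> v ! i)" by (simp add: L_def)
      finally show "?thesis v" .
    qed
    have lg: "real m \<le> log 2 (real n) + 4" using logb[OF m2 n1] .
    have pq: "qprefix (pre (Suc m) False M) = map (fA False) [0..<Suc m]" using P by blast
    show ?thesis
    proof (intro exI[of _ "pre (Suc m) False M"] conjI)
      show "strictly_alternating (qprefix (pre (Suc m) False M))" unfolding pq by (rule alt)
      show "last (qprefix (pre (Suc m) False M)) = QAll" using P last_fA[of "Suc m" False] mo by (simp add: fA_def)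
      show "qprefix (pre (Suc m) False M) \<noteq> []" using P by simp
      show "models w (pre (Suc m) False M)" using sem[of w] n_def by simp
      show "\<not> models w' (pre (Suc m) False M)" using sem[of w'] C d by auto
      show "real (qcount (pre (Suc m) False M)) \<le> log 2 (real (length w)) + 5" using P lg n_def by simp
    qed (use P alt in auto)
  qed
qed

end
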